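(* Let $\mathcal{S}$ be finite, $\Pi$ irreducible stochastic on $\mathcal{S}$, $\kappa(x,y):=\pi_{xy}-\mathbf{1}_{x=y}$, $\mathcal{K}=\Pi-\mathrm{I}$, $Q=(q(y))$ the invariant distribution, and assume detailed balance $q(y)\kappa(y,z)=q(z)\kappa(z,y)$ for all $y,z$. Let $\Phi:(0,\infty)\to\mathbb{R}$ be convex, continuously differentiable with continuous strictly positive second derivative, $\Phi(1)=0$, $\varphi:=\Phi'$. Let $\boldsymbol{\ell}_t=\ell(t,\cdot)$, $\ell(t,y):=p(t,y)/q(y)$, where $p(t,\cdot)$ is the time-$t$ law of the chain with generator $\mathcal{K}$ started from a positive initial distribution. Fix $t_0>0$, put $\boldsymbol{\ell}:=\boldsymbol{\ell}_{t_0}$, and let $(\psi_t)_{t_0\le t<t_0+\varepsilon}$ be continuous and $(\ell^\psi_t)$ positive with $\ell^\psi_{t_0}=\boldsymbol{\ell}_{t_0}$ and $\partial_t\ell^\psi_t+\nabla\cdot(\vartheta_{\boldsymbol{\ell}_t}\nabla\psi_t)=0$. Then $$\lim_{h\downarrow0}\frac1h\big\|\boldsymbol{\ell}_{t_0+h}-\boldsymbol{\ell}_{t_0}\big\|_{\mathbb{H}^{-1}_\Theta(\mathcal{S},\boldsymbol{\ell}Q)}=\big\|\mathcal{K}\boldsymbol{\ell}_{t_0}\big\|_{\mathbb{H}^{-1}_\Theta(\mathcal{S},\boldsymbol{\ell}Q)}=\big\|\varphi(\boldsymbol{\ell}_{t_0})\big\|_{\mathbb{H}^1_\Theta(\mathcal{S},\boldsymbol{\ell}Q)},$$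 and $$\lim_{h\downarrow0}\frac1h\big\|\ell^\psi_{t_0+h}-\ell^\psi_{t_0}\big\|_{\mathbb{H}^{-1}_\Theta(\mathcal{S},\boldsymbol{\ell}Q)}=\big\|\nabla\cdot(\vartheta_{\boldsymbol{\ell}_{t_0}}\nabla\psi_{t_0})\big\|_{\mathbb{H}^{-1}_\Theta(\mathcal{S},\boldsymbol{\ell}Q)}=\big\|\psi_{t_0}\big\|_{\mathbb{H}^1_\Theta(\mathcal{S},\boldsymbol{\ell}Q)} .$$
   Context: $\mathcal{Z}:=\{(x,y):\kappa(x,y)>0\}$, $c(x,y):=\frac12\kappa(x,y)q(x)$, $\nabla f(x,y):=f(y)-f(x)$, $(\nabla\cdot F)(x):=\frac12\sum_{y\neq x}\kappa(x,y)[F(x,y)-F(y,x)]$. $\Theta^\Phi(a,b):=\frac{a-b}{\varphi(a)-\varphi(b)}$ for $a\ne b$, $\Theta^\Phi(b,b):=1/\Phi''(b)$; for positive $\ell$, $\vartheta_\ell(x,y):=\Theta^\Phi(\ell(x),\ell(y))$. $\|f\|^2_{\mathbb{H}^1_\Theta(\mathcal{S},\ell Q)}:=\sum_{(x,y)\in\mathcal{Z}}c(x,y)\vartheta_\ell(x,y)(\nabla f(x,y))^2$, and $\|f\|_{\mathbb{H}^{-1}_\Theta(\mathcal{S},\ell Q)}:=\sup_{g:\mathcal{S}\to\mathbb{R}}\frac{\sum_xq(x)f(x)g(x)}{\|g\|_{\mathbb{H}^1_\Theta(\mathcal{S},\ell Q)}}$. *)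

theory Defs
  imports "HOL-Analysis.Analysis"
begin

definition kappa_of :: "('a \<Rightarrow> 'a \<Rightarrow> real) \<Rightarrow> 'a \<Rightarrow> 'a \<Rightarrow> real" where
  "kappa_of P x y = P x y - (if x = y then 1 else 0)"

definition stochastic :: "('a::finite \<Rightarrow> 'a \<Rightarrow> real) \<Rightarrow> bool" where
  "stochastic P \<longleftrightarrow> (\<forall>x y. P x y \<ge> 0) \<and> (\<forall>x. (\<Sum>y\<in>UNIV. P x y) = 1)"

definition irreducible_chain :: "('a \<Rightarrow> 'a \<Rightarrow> real) \<Rightarrow> bool" where
  "irreducible_chain P \<longleftrightarrow> (\<forall>x y. (x, y) \<in> {(a, b). P a b > 0}\<^sup>*)"

definition invariant_distribution :: "('a::finite \<Rightarrow> 'a \<Rightarrow> real) \<Rightarrow> ('a \<Rightarrow> real) \<Rightarrow> bool" where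
  "invariant_distribution P q \<longleftrightarrow> (\<forall>x. q x \<ge> 0) \<and> (\<Sum>x\<in>UNIV. q x) = 1 \<and>
     (\<forall>y. (\<Sum>x\<in>UNIV. q x * P x y) = q y)"

definition gen :: "('a::finite \<Rightarrow> 'a \<Rightarrow> real) \<Rightarrow> ('a \<Rightarrow> real) \<Rightarrow> 'a \<Rightarrow> real" where
  "gen kap f x = (\<Sum>y\<in>UNIV. kap x y * f y)"

definition grad :: "('a \<Rightarrow> real) \<Rightarrow> 'a \<Rightarrow> 'a \<Rightarrow> real" where
  "grad f x y = f y - f x"

definition divg :: "('a::finite \<Rightarrow> 'a \<Rightarrow> real) \<Rightarrow> ('a \<Rightarrow> 'a \<Rightarrow> real) \<Rightarrow> 'a \<Rightarrow> real" where
  "divg kap F x = (1/2) * (\<Sum>y\<in>UNIV - {x}. kap x y * (F x y - F y x))"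

text \<open>Theta^Phi(a,b); phi = Phi', phi2 = Phi''.\<close>
definition Theta :: "(real \<Rightarrow> real) \<Rightarrow> (real \<Rightarrow> real) \<Rightarrow> real \<Rightarrow> real \<Rightarrow> real" where
  "Theta phi phi2 a b = (if a \<noteq> b then (a - b) / (phi a - phi b) else 1 / phi2 b)"

definition vartheta :: "(real \<Rightarrow> real) \<Rightarrow> (real \<Rightarrow> real) \<Rightarrow> ('a \<Rightarrow> real) \<Rightarrow> 'a \<Rightarrow> 'a \<Rightarrow> real" where
  "vartheta phi phi2 l x y = Theta phi phi2 (l x) (l y)"

definition flux :: "(real \<Rightarrow> real) \<Rightarrow> (real \<Rightarrow> real) \<Rightarrow> ('a \<Rightarrow> real) \<Rightarrow> ('a \<Rightarrow> real) \<Rightarrow> 'a \<Rightarrow> 'a \<Rightarrow> real" where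
  "flux phi phi2 l f x y = vartheta phi phi2 l x y * grad f x y"

definition H1norm :: "('a::finite \<Rightarrow> 'a \<Rightarrow> real) \<Rightarrow> ('a \<Rightarrow> real) \<Rightarrow> (real \<Rightarrow> real) \<Rightarrow> (real \<Rightarrow> real)
    \<Rightarrow> ('a \<Rightarrow> real) \<Rightarrow> ('a \<Rightarrow> real) \<Rightarrow> real" where
  "H1norm kap q phi phi2 l f =
     sqrt (\<Sum>(x, y)\<in>{(x, y). kap x y > 0}. (1/2) * kap x y * q x * vartheta phi phi2 l x y * (grad f x y)\<^sup>2)"

definition Hm1norm :: "('a::finite \<Rightarrow> 'a \<Rightarrow> real) \<Rightarrow> ('a \<Rightarrow> real) \<Rightarrow> (real \<Rightarrow> real) \<Rightarrow> (real \<Rightarrow> real)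
    \<Rightarrow> ('a \<Rightarrow> real) \<Rightarrow> ('a \<Rightarrow> real) \<Rightarrow> ereal" where
  "Hm1norm kap q phi phi2 l f =
     (SUP g\<in>UNIV. (let n = (\<Sum>x\<in>UNIV. q x * f x * g x); d = H1norm kap q phi phi2 l g in
        if d = 0 then (if n = 0 then 0 else \<infinity>) else ereal (n / d)))"

end

theory Submission
  imports Defs
begin


definition Bf :: "('a::finite \<Rightarrow> 'a \<Rightarrow> real) \<Rightarrow> ('a \<Rightarrow> real) \<Rightarrow> (real \<Rightarrow> real) \<Rightarrow> (real \<Rightarrow> real)
    \<Rightarrow> ('a \<Rightarrow> real) \<Rightarrow> ('a \<Rightarrow> real) \<Rightarrow> ('a \<Rightarrow> real) \<Rightarrow> real" where
  "Bf kap q phi phi2 l u g =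
     (\<Sum>(x, y)\<in>{(x, y). kap x y > 0}. (1/2) * kap x y * q x * vartheta phi phi2 l x y * (grad u x y * grad g x y))"

lemma H1norm_nonneg:
  fixes kap :: "'a::finite \<Rightarrow> 'a \<Rightarrow> real"
  assumes W: "\<forall>x y. kap x y > 0 \<longrightarrow> (1/2) * kap x y * q x * vartheta phi phi2 l x y \<ge> 0"
  shows "H1norm kap q phi phi2 l f \<ge> 0"
  unfolding H1norm_def using W by (intro real_sqrt_ge_zero sum_nonneg) auto

lemma CS_Bf:
  fixes kap :: "'a::finite \<Rightarrow> 'a \<Rightarrow> real"
  assumes W: "\<forall>x y. kap x y > 0 \<longrightarrow> (1/2) * kap x y * q x * vartheta phi phi2 l x y \<ge> 0"
  shows "\<bar>Bf kap q phi phi2 l u g\<bar> \<le> H1norm kap q phi phi2 l u * H1norm kap q phi phi2 l g"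
proof -
  let ?Z = "{(x, y). kap x y > 0}"
  define w where "w = (\<lambda>(x,y). (1/2) * kap x y * q x * vartheta phi phi2 l x y)"
  define a where "a = (\<lambda>(x,y). sqrt (w (x,y)) * grad u x y)"
  define b where "b = (\<lambda>(x,y). sqrt (w (x,y)) * grad g x y)"
  have wn: "\<And>z. z \<in> ?Z \<Longrightarrow> w z \<ge> 0" using W unfolding w_def by auto
  have ss: "\<And>z. z \<in> ?Z \<Longrightarrow> sqrt (w z) * sqrt (w z) = w z" using wn by simp
  have e1: "Bf kap q phi phi2 l u g = (\<Sum>z\<in>?Z. a z * b z)"
    unfolding Bf_def a_def b_def
    apply (rule sum.cong, simp)
    subgoal for z using ss[of z] by (cases z) (simp add: w_def algebra_simps)
    done
  have e2: "H1norm kap q phi phi2 l u = sqrt (\<Sum>z\<in>?Z. (a z)\<^sup>2)"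
    unfolding H1norm_def a_def
    apply (rule arg_cong[where f=sqrt], rule sum.cong, simp)
    using wn by (auto simp: w_def power_mult_distrib)
  have e3: "H1norm kap q phi phi2 l g = sqrt (\<Sum>z\<in>?Z. (b z)\<^sup>2)"
    unfolding H1norm_def b_def
    apply (rule arg_cong[where f=sqrt], rule sum.cong, simp)
    using wn by (auto simp: w_def power_mult_distrib)
  have "(\<Sum>z\<in>?Z. a z * b z)\<^sup>2 \<le> (\<Sum>z\<in>?Z. (a z)\<^sup>2) * (\<Sum>z\<in>?Z. (b z)\<^sup>2)"
    by (rule Cauchy_Schwarz_ineq_sum)
  hence "sqrt ((\<Sum>z\<in>?Z. a z * b z)\<^sup>2) \<le> sqrt ((\<Sum>z\<in>?Z. (a z)\<^sup>2) * (\<Sum>z\<in>?Z. (b z)\<^sup>2))"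
    using real_sqrt_le_mono by blast
  thus ?thesis unfolding e1 e2 e3 by (simp add: real_sqrt_mult)
qed


lemma Hm1_repr:
  fixes kap :: "'a::finite \<Rightarrow> 'a \<Rightarrow> real"
  assumes W: "\<forall>x y. kap x y > 0 \<longrightarrow> (1/2) * kap x y * q x * vartheta phi phi2 l x y \<ge> 0"
    and rep: "\<And>g. (\<Sum>x\<in>UNIV. q x * f x * g x) = - Bf kap q phi phi2 l u g"
  shows "Hm1norm kap q phi phi2 l f = ereal (H1norm kap q phi phi2 l u)"
proof -
  let ?N = "H1norm kap q phi phi2 l"
  have Sn: "(\<Sum>(x, y)\<in>{(x, y). kap x y > 0}. (1/2) * kap x y * q x * vartheta phi phi2 l x y * (grad u x y)\<^sup>2) \<ge> 0"
    using W by (intro sum_nonneg) auto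
  have self: "Bf kap q phi phi2 l u u = (?N u)\<^sup>2"
    unfolding Bf_def H1norm_def using Sn by (simp add: power2_eq_square)
  have gm: "grad (\<lambda>x. - u x) = (\<lambda>x y. - grad u x y)" by (auto simp: grad_def fun_eq_iff)
  have Nm: "?N (\<lambda>x. - u x) = ?N u" unfolding H1norm_def gm by simp
  have Bm: "Bf kap q phi phi2 l u (\<lambda>x. - u x) = - Bf kap q phi phi2 l u u"
    unfolding Bf_def gm by (simp add: sum_negf[symmetric] case_prod_unfold)
  show ?thesis
    unfolding Hm1norm_def Let_def
  proof (rule antisym)
    show "(SUP g. if ?N g = 0 then if (\<Sum>x\<in>UNIV. q x * f x * g x) = 0 then 0 else \<infinity>
            else ereal ((\<Sum>x\<in>UNIV. q x * f x * g x) / ?N g)) \<le> ereal (?N u)"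
    proof (rule SUP_least)
      fix g
      have cs: "\<bar>(\<Sum>x\<in>UNIV. q x * f x * g x)\<bar> \<le> ?N u * ?N g"
        using CS_Bf[OF W, of u g] rep[of g] by simp
      show "(if ?N g = 0 then if (\<Sum>x\<in>UNIV. q x * f x * g x) = 0 then 0 else \<infinity>
            else ereal ((\<Sum>x\<in>UNIV. q x * f x * g x) / ?N g)) \<le> ereal (?N u)"
      proof (cases "?N g = 0")
        case True
        then show ?thesis using cs H1norm_nonneg[OF W, of u] by auto
      next
        case False
        hence pos: "?N g > 0" using H1norm_nonneg[OF W, of g] by linarith
        have "(\<Sum>x\<in>UNIV. q x * f x * g x) / ?N g \<le> ?N u"
          using cs pos by (simp add: divide_le_eq)
        then show ?thesis using False by simp
      qed
    qed
  next
    show "ereal (?N u) \<le> (SUP g. if ?N g = 0 then if (\<Sum>x\<in>UNIV. q x * f x * g x) = 0 then 0 else \<infinity>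
            else ereal ((\<Sum>x\<in>UNIV. q x * f x * g x) / ?N g))"
    proof (cases "?N u = 0")
      case True
      have "?N (\<lambda>x. 0) = 0" unfolding H1norm_def grad_def by simp
      then show ?thesis using True
        by (intro SUP_upper2[where i="\<lambda>x. 0"]) auto
    next
      case False
      have "(\<Sum>x\<in>UNIV. q x * f x * (- u x)) / ?N (\<lambda>x. - u x) = ?N u"
        using rep[of "\<lambda>x. - u x"] Bm self Nm False by (simp add: power2_eq_square)
      then show ?thesis using False Nm
        by (intro SUP_upper2[where i="\<lambda>x. - u x"]) auto
    qed
  qed
qed

lemma antisym_sum:
  fixes kap :: "'a::finite \<Rightarrow> 'a \<Rightarrow> real"
  assumes db: "\<forall>y z. q y * kap y z = q z * kap z y" and G: "\<forall>x y. G y x = - G x y"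
  shows "(\<Sum>x\<in>UNIV. q x * g x * (\<Sum>y\<in>UNIV. kap x y * G x y))
       = -(1/2) * (\<Sum>x\<in>UNIV. \<Sum>y\<in>UNIV. q x * kap x y * G x y * grad g x y)"
proof -
  define S1 where "S1 = (\<Sum>x\<in>UNIV. \<Sum>y\<in>UNIV. q x * kap x y * G x y * g x)"
  have a: "(\<Sum>x\<in>UNIV. q x * g x * (\<Sum>y\<in>UNIV. kap x y * G x y)) = S1"
    unfolding S1_def by (simp add: sum_distrib_left algebra_simps)
  have "S1 = (\<Sum>y\<in>UNIV. \<Sum>x\<in>UNIV. q x * kap x y * G x y * g x)"
    unfolding S1_def by (rule sum.swap)
  also have "\<dots> = (\<Sum>x\<in>UNIV. \<Sum>y\<in>UNIV. - (q x * kap x y * G x y * g y))"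
    using db G by (intro sum.cong refl) (metis mult.commute mult.left_commute mult_minus_right)
  finally have b: "S1 = (\<Sum>x\<in>UNIV. \<Sum>y\<in>UNIV. - (q x * kap x y * G x y * g y))" .
  have "S1 + S1 = (\<Sum>x\<in>UNIV. \<Sum>y\<in>UNIV. - (q x * kap x y * G x y * grad g x y))"
    apply (subst (2) b) unfolding S1_def grad_def
    by (simp add: sum.distrib[symmetric] algebra_simps)
  thus ?thesis using a by (simp add: sum_negf)
qed

lemma sum_Z:
  fixes kap :: "'a::finite \<Rightarrow> 'a \<Rightarrow> real"
  assumes "\<forall>x y. \<not> kap x y > 0 \<longrightarrow> F x y = 0"
  shows "(\<Sum>x\<in>UNIV. \<Sum>y\<in>UNIV. F x y) = (\<Sum>(x, y)\<in>{(x, y). kap x y > 0}. F x y)"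
proof -
  have "(\<Sum>x\<in>UNIV. \<Sum>y\<in>UNIV. F x y) = (\<Sum>(x, y)\<in>UNIV. F x y)"
    by (simp add: sum.cartesian_product)
  also have "\<dots> = (\<Sum>(x, y)\<in>{(x, y). kap x y > 0}. F x y)"
    using assms by (intro sum.mono_neutral_right) auto
  finally show ?thesis .
qed

lemma Theta_sym: "Theta phi phi2 a b = Theta phi phi2 b a"
proof (cases "a = b")
  case True thus ?thesis by simp
next
  case False
  have "(b - a) / (phi b - phi a) = (- (a - b)) / (- (phi a - phi b))" by simp
  also have "\<dots> = (a - b) / (phi a - phi b)" by (rule minus_divide_divide)
  finally show ?thesis using False unfolding Theta_def by simp
qed

lemma vartheta_sym: "vartheta phi phi2 l x y = vartheta phi phi2 l y x"
  unfolding vartheta_def by (rule Theta_sym)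

lemma gen_repr:
  fixes kap :: "'a::finite \<Rightarrow> 'a \<Rightarrow> real"
  assumes db: "\<forall>y z. q y * kap y z = q z * kap z y"
    and rows: "\<forall>x. (\<Sum>y\<in>UNIV. kap x y) = 0"
    and offd: "\<forall>x y. x \<noteq> y \<longrightarrow> kap x y \<ge> 0"
    and inj: "\<forall>x y. l x \<noteq> l y \<longrightarrow> phi (l x) \<noteq> phi (l y)"
  shows "(\<Sum>x\<in>UNIV. q x * gen kap l x * g x) = - Bf kap q phi phi2 l (\<lambda>y. phi (l y)) g"
proof -
  have z: "\<And>x y. \<not> kap x y > 0 \<Longrightarrow> kap x y = 0 \<or> x = y" using offd by force
  have gk: "gen kap l x = (\<Sum>y\<in>UNIV. kap x y * grad l x y)" for x
  proof -
    have "(\<Sum>y\<in>UNIV. kap x y * l x) = 0" using rows by (simp add: sum_distrib_right[symmetric])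
    thus ?thesis unfolding gen_def grad_def by (simp add: right_diff_distrib sum_subtractf)
  qed
  have "(\<Sum>x\<in>UNIV. q x * gen kap l x * g x) = (\<Sum>x\<in>UNIV. q x * g x * (\<Sum>y\<in>UNIV. kap x y * grad l x y))"
    unfolding gk by (simp add: algebra_simps)
  also have "\<dots> = -(1/2) * (\<Sum>x\<in>UNIV. \<Sum>y\<in>UNIV. q x * kap x y * grad l x y * grad g x y)"
    by (rule antisym_sum[OF db]) (simp add: grad_def)
  also have "(\<Sum>x\<in>UNIV. \<Sum>y\<in>UNIV. q x * kap x y * grad l x y * grad g x y)
     = (\<Sum>x\<in>UNIV. \<Sum>y\<in>UNIV. 2 * ((1/2) * kap x y * q x * vartheta phi phi2 l x y * (grad (\<lambda>y. phi (l y)) x y * grad g x y)))"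
  proof (intro sum.cong refl)
    fix x y
    have "vartheta phi phi2 l x y * grad (\<lambda>y. phi (l y)) x y = grad l x y"
    proof (cases "l x = l y")
      case True thus ?thesis by (simp add: grad_def)
    next
      case False
      hence d: "phi (l x) - phi (l y) \<noteq> 0" using inj by auto
      have m: "(l x - l y) * (phi (l y) - phi (l x)) = (l y - l x) * (phi (l x) - phi (l y))"
        by (simp add: algebra_simps)
      have "vartheta phi phi2 l x y * grad (\<lambda>y. phi (l y)) x y
          = (l x - l y) / (phi (l x) - phi (l y)) * (phi (l y) - phi (l x))"
        using False unfolding vartheta_def Theta_def grad_def by simp
      also have "\<dots> = (l x - l y) * (phi (l y) - phi (l x)) / (phi (l x) - phi (l y))" by simp
      also have "\<dots> = l y - l x" unfolding m using d by simp
      finally show ?thesis unfolding grad_def .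
    qed
    hence "q x * kap x y * grad l x y * grad g x y = q x * kap x y * (vartheta phi phi2 l x y * grad (\<lambda>y. phi (l y)) x y) * grad g x y" by simp
    thus "q x * kap x y * grad l x y * grad g x y =
      2 * ((1/2) * kap x y * q x * vartheta phi phi2 l x y * (grad (\<lambda>y. phi (l y)) x y * grad g x y))"
      by (simp add: algebra_simps)
  qed
  also have "\<dots> = 2 * Bf kap q phi phi2 l (\<lambda>y. phi (l y)) g"
    unfolding Bf_def sum_distrib_left[symmetric]
    apply (subst sum_Z[where kap=kap])
    using z by (auto simp: grad_def)
  finally show ?thesis by simp
qed

lemma divg_repr:
  fixes kap :: "'a::finite \<Rightarrow> 'a \<Rightarrow> real"
  assumes db: "\<forall>y z. q y * kap y z = q z * kap z y"
    and offd: "\<forall>x y. x \<noteq> y \<longrightarrow> kap x y \<ge> 0"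
  shows "(\<Sum>x\<in>UNIV. q x * divg kap (flux phi phi2 l u) x * g x) = - Bf kap q phi phi2 l u g"
proof -
  have z: "\<And>x y. \<not> kap x y > 0 \<Longrightarrow> kap x y = 0 \<or> x = y" using offd by force
  let ?F = "flux phi phi2 l u"
  have as: "?F y x = - ?F x y" for x y
    unfolding flux_def grad_def using vartheta_sym[of phi phi2 l x y] by (simp add: algebra_simps)
  have dk: "divg kap ?F x = (\<Sum>y\<in>UNIV. kap x y * ?F x y)" for x
  proof -
    have "divg kap ?F x = (1/2) * (\<Sum>y\<in>UNIV. kap x y * (?F x y - ?F y x))"
      unfolding divg_def by (subst sum.remove[of UNIV x]) (auto simp: flux_def grad_def)
    also have "\<dots> = (1/2) * (\<Sum>y\<in>UNIV. 2 * (kap x y * ?F x y))"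
    proof (intro arg_cong[where f="\<lambda>t. (1/2) * t"] sum.cong refl)
      fix y
      have "?F x y - ?F y x = 2 * ?F x y" using as[of x y] by linarith
      thus "kap x y * (?F x y - ?F y x) = 2 * (kap x y * ?F x y)" by simp
    qed
    also have "\<dots> = (\<Sum>y\<in>UNIV. kap x y * ?F x y)"
      by (simp add: sum_distrib_left[symmetric])
    finally show ?thesis .
  qed
  have "(\<Sum>x\<in>UNIV. q x * divg kap ?F x * g x) = (\<Sum>x\<in>UNIV. q x * g x * (\<Sum>y\<in>UNIV. kap x y * ?F x y))"
    unfolding dk by (simp add: algebra_simps)
  also have "\<dots> = -(1/2) * (\<Sum>x\<in>UNIV. \<Sum>y\<in>UNIV. q x * kap x y * ?F x y * grad g x y)"
    by (rule antisym_sum[OF db]) (use as in blast)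
  also have "(\<Sum>x\<in>UNIV. \<Sum>y\<in>UNIV. q x * kap x y * ?F x y * grad g x y)
     = (\<Sum>x\<in>UNIV. \<Sum>y\<in>UNIV. 2 * ((1/2) * kap x y * q x * vartheta phi phi2 l x y * (grad u x y * grad g x y)))"
    unfolding flux_def by (intro sum.cong refl) (simp add: algebra_simps)
  also have "\<dots> = 2 * Bf kap q phi phi2 l u g"
    unfolding Bf_def sum_distrib_left[symmetric]
    apply (subst sum_Z[where kap=kap])
    using z by (auto simp: grad_def)
  finally show ?thesis by simp
qed



lemma edge_bound:
  fixes kap :: "'a::finite \<Rightarrow> 'a \<Rightarrow> real"
  assumes W: "\<forall>x y. kap x y > 0 \<longrightarrow> (1/2) * kap x y * q x * vartheta phi phi2 l x y \<ge> 0"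
    and k: "kap a b > 0" and w: "(1/2) * kap a b * q a * vartheta phi phi2 l a b > 0"
  shows "\<bar>g b - g a\<bar> \<le> (1 / sqrt ((1/2) * kap a b * q a * vartheta phi phi2 l a b)) * H1norm kap q phi phi2 l g"
proof -
  define wab where "wab = (1/2) * kap a b * q a * vartheta phi phi2 l a b"
  define S where "S = (\<Sum>(x, y)\<in>{(x, y). kap x y > 0}. (1/2) * kap x y * q x * vartheta phi phi2 l x y * (grad g x y)\<^sup>2)"
  have "wab * (grad g a b)\<^sup>2 \<le> S"
    unfolding S_def wab_def
    using member_le_sum[of "(a,b)" "{(x, y). kap x y > 0}" "\<lambda>(x,y). (1/2) * kap x y * q x * vartheta phi phi2 l x y * (grad g x y)\<^sup>2"] W k
    by auto
  hence "(grad g a b)\<^sup>2 \<le> S / wab" using w unfolding wab_def[symmetric] by (simp add: field_simps)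
  hence "sqrt ((grad g a b)\<^sup>2) \<le> sqrt (S / wab)" using real_sqrt_le_mono by blast
  hence "\<bar>g b - g a\<bar> \<le> sqrt S / sqrt wab" by (simp add: real_sqrt_divide grad_def)
  moreover have Hn: "H1norm kap q phi phi2 l g = sqrt S" unfolding H1norm_def S_def by simp
  ultimately show ?thesis unfolding Hn wab_def[symmetric] by simp
qed

lemma poincare:
  fixes P kap :: "'a::finite \<Rightarrow> 'a \<Rightarrow> real"
  assumes irr: "\<forall>x y. (x, y) \<in> {(a, b). P a b > 0}\<^sup>*"
    and edge: "\<forall>a b. a \<noteq> b \<longrightarrow> P a b > 0 \<longrightarrow> kap a b > 0 \<and> (1/2) * kap a b * q a * vartheta phi phi2 l a b > 0"
    and W: "\<forall>x y. kap x y > 0 \<longrightarrow> (1/2) * kap x y * q x * vartheta phi phi2 l x y \<ge> 0"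
  shows "\<exists>C\<ge>0. \<forall>g x y. \<bar>g x - g y\<bar> \<le> C * H1norm kap q phi phi2 l g"
proof -
  let ?N = "H1norm kap q phi phi2 l"
  fix x0 :: 'a
  have "\<exists>C. \<forall>g. \<bar>g x - g x0\<bar> \<le> C * ?N g" for x
  proof -
    have "(x0, x) \<in> {(a, b). P a b > 0}\<^sup>*" using irr by blast
    thus ?thesis
    proof (induction rule: rtrancl_induct)
      case base
      then show ?case using H1norm_nonneg[OF W] by (intro exI[of _ 0]) auto
    next
      case (step a b)
      then obtain Ca where Ca: "\<forall>g. \<bar>g a - g x0\<bar> \<le> Ca * ?N g" by blast
      show ?case
      proof (cases "a = b")
        case True thus ?thesis using Ca by blast
      next
        case False
        hence e: "kap a b > 0" "(1/2) * kap a b * q a * vartheta phi phi2 l a b > 0" using edge step(2) by auto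
        show ?thesis
        proof (intro exI allI)
          fix g :: "'a \<Rightarrow> real"
          have "\<bar>g b - g x0\<bar> \<le> \<bar>g b - g a\<bar> + \<bar>g a - g x0\<bar>" by linarith
          also have "\<dots> \<le> (1 / sqrt ((1/2) * kap a b * q a * vartheta phi phi2 l a b)) * ?N g + Ca * ?N g"
            using edge_bound[OF W e, of g] Ca by (intro add_mono) auto
          finally show "\<bar>g b - g x0\<bar> \<le> (1 / sqrt ((1/2) * kap a b * q a * vartheta phi phi2 l a b) + Ca) * ?N g"
            by (simp add: algebra_simps)
        qed
      qed
    qed
  qed
  then obtain Cf where Cf: "\<And>x g. \<bar>g x - g x0\<bar> \<le> Cf x * ?N g" by metis
  define C where "C = 2 * (\<Sum>x\<in>UNIV. \<bar>Cf x\<bar>)"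
  have Cle: "Cf x \<le> (\<Sum>x\<in>UNIV. \<bar>Cf x\<bar>)" for x
    using member_le_sum[of x UNIV "\<lambda>x. \<bar>Cf x\<bar>"] by auto
  show ?thesis
  proof (intro exI conjI allI)
    show "C \<ge> 0" unfolding C_def by (simp add: sum_nonneg)
    fix g :: "'a \<Rightarrow> real" and x y
    have n: "?N g \<ge> 0" using H1norm_nonneg[OF W] .
    have "\<bar>g x - g y\<bar> \<le> \<bar>g x - g x0\<bar> + \<bar>g y - g x0\<bar>" by linarith
    also have "\<dots> \<le> Cf x * ?N g + Cf y * ?N g" using Cf by (intro add_mono)
    also have "\<dots> \<le> (\<Sum>x\<in>UNIV. \<bar>Cf x\<bar>) * ?N g + (\<Sum>x\<in>UNIV. \<bar>Cf x\<bar>) * ?N g"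
      using n Cle by (intro add_mono mult_right_mono) auto
    finally show "\<bar>g x - g y\<bar> \<le> C * ?N g" unfolding C_def by simp
  qed
qed

definition Tq :: "('a::finite \<Rightarrow> 'a \<Rightarrow> real) \<Rightarrow> ('a \<Rightarrow> real) \<Rightarrow> (real \<Rightarrow> real) \<Rightarrow> (real \<Rightarrow> real)
    \<Rightarrow> ('a \<Rightarrow> real) \<Rightarrow> ('a \<Rightarrow> real) \<Rightarrow> ('a \<Rightarrow> real) \<Rightarrow> real" where
  "Tq kap q phi phi2 l f g = (if H1norm kap q phi phi2 l g = 0 then 0
      else (\<Sum>x\<in>UNIV. q x * f x * g x) / H1norm kap q phi phi2 l g)"

definition Mq :: "('a::finite \<Rightarrow> 'a \<Rightarrow> real) \<Rightarrow> ('a \<Rightarrow> real) \<Rightarrow> (real \<Rightarrow> real) \<Rightarrow> (real \<Rightarrow> real)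
    \<Rightarrow> ('a \<Rightarrow> real) \<Rightarrow> ('a \<Rightarrow> real) \<Rightarrow> real" where
  "Mq kap q phi phi2 l f = (SUP g. Tq kap q phi phi2 l f g)"

locale PC =
  fixes kap :: "'a::finite \<Rightarrow> 'a \<Rightarrow> real" and q :: "'a \<Rightarrow> real" and phi phi2 :: "real \<Rightarrow> real"
    and l :: "'a \<Rightarrow> real" and C :: real
  assumes W: "\<forall>x y. kap x y > 0 \<longrightarrow> (1/2) * kap x y * q x * vartheta phi phi2 l x y \<ge> 0"
    and C0: "C \<ge> 0"
    and PC: "\<forall>g x y. \<bar>g x - g y\<bar> \<le> C * H1norm kap q phi phi2 l g"
    and qnn: "\<forall>x. q x \<ge> 0"
begin

abbreviation "N \<equiv> H1norm kap q phi phi2 l"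
abbreviation "T \<equiv> Tq kap q phi phi2 l"
abbreviation "M \<equiv> Mq kap q phi phi2 l"
abbreviation "L1 f \<equiv> (\<Sum>x\<in>UNIV. q x * \<bar>f x\<bar>)"

lemma inner_bound:
  assumes m: "(\<Sum>x\<in>UNIV. q x * f x) = 0"
  shows "\<bar>\<Sum>x\<in>UNIV. q x * f x * g x\<bar> \<le> C * L1 f * N g"
proof -
  fix x0 :: 'a
  have "(\<Sum>x\<in>UNIV. q x * f x * g x) = (\<Sum>x\<in>UNIV. q x * f x * (g x - g x0))"
    using m by (simp add: right_diff_distrib sum_subtractf sum_distrib_right[symmetric])
  also have "\<bar>\<dots>\<bar> \<le> (\<Sum>x\<in>UNIV. \<bar>q x * f x * (g x - g x0)\<bar>)" by (rule sum_abs)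
  also have "\<dots> \<le> (\<Sum>x\<in>UNIV. q x * \<bar>f x\<bar> * (C * N g))"
  proof (intro sum_mono)
    fix x
    have "\<bar>q x * f x * (g x - g x0)\<bar> = q x * \<bar>f x\<bar> * \<bar>g x - g x0\<bar>"
      using qnn by (simp add: abs_mult)
    also have "\<dots> \<le> q x * \<bar>f x\<bar> * (C * N g)"
      using PC qnn by (intro mult_left_mono) auto
    finally show "\<bar>q x * f x * (g x - g x0)\<bar> \<le> q x * \<bar>f x\<bar> * (C * N g)" .
  qed
  also have "\<dots> = L1 f * (C * N g)" by (simp add: sum_distrib_right)
  also have "\<dots> = C * L1 f * N g" by simp
  finally show ?thesis .
qed

lemma L1_nonneg: "L1 f \<ge> 0" using qnn by (intro sum_nonneg) auto

lemma T_bound: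
  assumes m: "(\<Sum>x\<in>UNIV. q x * f x) = 0"
  shows "\<bar>T f g\<bar> \<le> C * L1 f"
proof (cases "N g = 0")
  case True thus ?thesis unfolding Tq_def using C0 L1_nonneg by simp
next
  case False
  hence pos: "N g > 0" using H1norm_nonneg[OF W, of g] by linarith
  have "\<bar>T f g\<bar> = \<bar>\<Sum>x\<in>UNIV. q x * f x * g x\<bar> / N g" using False pos unfolding Tq_def by (simp add: abs_divide abs_of_pos[OF pos])
  also have "\<dots> \<le> C * L1 f" using inner_bound[OF m, of g] pos by (simp add: divide_le_eq)
  finally show ?thesis .
qed

lemma bdd: assumes m: "(\<Sum>x\<in>UNIV. q x * f x) = 0" shows "bdd_above (range (T f))"
  using T_bound[OF m] by (intro bdd_aboveI[of _ "C * L1 f"]) (auto simp: abs_le_iff)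

lemma T0: "T f (\<lambda>x. 0) = 0" unfolding Tq_def by simp

lemma Hm1_M:
  assumes m: "(\<Sum>x\<in>UNIV. q x * f x) = 0"
  shows "Hm1norm kap q phi phi2 l f = ereal (M f)"
proof -
  have "Hm1norm kap q phi phi2 l f = (SUP g. ereal (T f g))"
    unfolding Hm1norm_def Let_def Tq_def
  proof (intro SUP_cong refl)
    fix g
    show "(if N g = 0 then if (\<Sum>x\<in>UNIV. q x * f x * g x) = 0 then 0 else \<infinity>
          else ereal ((\<Sum>x\<in>UNIV. q x * f x * g x) / N g)) =
         ereal (if N g = 0 then 0 else (\<Sum>x\<in>UNIV. q x * f x * g x) / N g)"
      using inner_bound[OF m, of g] by auto
  qed
  also have "\<dots> = ereal (M f)" unfolding Mq_def
  proof (rule ereal_SUP[symmetric])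
    have "(SUP g. ereal (T f g)) \<le> ereal (C * L1 f)"
      using T_bound[OF m] by (intro SUP_least) (auto simp: abs_le_iff)
    moreover have "(SUP g. ereal (T f g)) \<ge> ereal (T f (\<lambda>x. 0))" by (rule SUP_upper) simp
    ultimately show "\<bar>SUP g. ereal (T f g)\<bar> \<noteq> \<infinity>" unfolding T0 by auto
  qed
  finally show ?thesis .
qed

lemma T_diff: "T f1 g = T f2 g + T (\<lambda>x. f1 x - f2 x) g"
  unfolding Tq_def by (auto simp: algebra_simps sum_subtractf add_divide_distrib[symmetric] diff_divide_distrib[symmetric])

lemma M_lip1:
  assumes m1: "(\<Sum>x\<in>UNIV. q x * f1 x) = 0" and m2: "(\<Sum>x\<in>UNIV. q x * f2 x) = 0"
  shows "M f1 \<le> M f2 + C * L1 (\<lambda>x. f1 x - f2 x)"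
proof -
  have m3: "(\<Sum>x\<in>UNIV. q x * (f1 x - f2 x)) = 0" using m1 m2 by (simp add: right_diff_distrib sum_subtractf)
  show ?thesis unfolding Mq_def
  proof (rule cSUP_least)
    fix g
    have "T f2 g \<le> M f2" unfolding Mq_def by (rule cSUP_upper[OF _ bdd[OF m2]]) simp
    moreover have "T (\<lambda>x. f1 x - f2 x) g \<le> C * L1 (\<lambda>x. f1 x - f2 x)"
      using T_bound[OF m3, of g] by simp
    ultimately show "T f1 g \<le> (SUP g. T f2 g) + C * L1 (\<lambda>x. f1 x - f2 x)"
      unfolding Mq_def T_diff[of f1 g f2] by simp
  qed simp
qed

lemma M_lip:
  assumes m1: "(\<Sum>x\<in>UNIV. q x * f1 x) = 0" and m2: "(\<Sum>x\<in>UNIV. q x * f2 x) = 0"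
  shows "\<bar>M f1 - M f2\<bar> \<le> C * L1 (\<lambda>x. f1 x - f2 x)"
proof -
  have "L1 (\<lambda>x. f2 x - f1 x) = L1 (\<lambda>x. f1 x - f2 x)" by (simp add: abs_minus_commute)
  thus ?thesis using M_lip1[OF m1 m2] M_lip1[OF m2 m1] by (simp add: abs_le_iff)
qed

lemma M_scale:
  assumes m: "(\<Sum>x\<in>UNIV. q x * f x) = 0" and c: "c > 0"
  shows "M (\<lambda>x. c * f x) = c * M f"
proof -
  have mc: "(\<Sum>x\<in>UNIV. q x * (c * f x)) = 0" using m by (simp add: sum_distrib_left[symmetric] algebra_simps)
  have Tc: "T (\<lambda>x. c * f x) g = c * T f g" for g
    unfolding Tq_def by (simp add: sum_distrib_left algebra_simps)
  have "M (\<lambda>x. c * f x) \<le> c * M f" unfolding Mq_def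
  proof (rule cSUP_least)
    fix g show "T (\<lambda>x. c * f x) g \<le> c * (SUP g. T f g)"
      unfolding Tc using c by (intro mult_left_mono cSUP_upper[OF _ bdd[OF m]]) auto
  qed simp
  moreover have "M f \<le> M (\<lambda>x. c * f x) / c" unfolding Mq_def
  proof (rule cSUP_least)
    fix g
    have "T (\<lambda>x. c * f x) g \<le> (SUP g. T (\<lambda>x. c * f x) g)" by (rule cSUP_upper[OF _ bdd[OF mc]]) simp
    thus "T f g \<le> (SUP g. T (\<lambda>x. c * f x) g) / c" unfolding Tc using c by (simp add: field_simps)
  qed simp
  ultimately show ?thesis using c by (simp add: field_simps)
qed

lemma lim_lemma:
  assumes mF: "eventually (\<lambda>h. (\<Sum>x\<in>UNIV. q x * F h x) = 0) (at_right 0)"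
    and mf: "(\<Sum>x\<in>UNIV. q x * f x) = 0"
    and conv: "\<forall>y. ((\<lambda>h. F h y / h) \<longlongrightarrow> f y) (at_right 0)"
  shows "((\<lambda>h. ereal (1/h) * Hm1norm kap q phi phi2 l (F h)) \<longlongrightarrow> Hm1norm kap q phi phi2 l f) (at_right (0::real))"
proof -
  define G where "G = (\<lambda>h x. (1/h) * F h x)"
  have ev: "eventually (\<lambda>h. ereal (1/h) * Hm1norm kap q phi phi2 l (F h) = ereal (M (G h))) (at_right 0)"
    using mF eventually_at_right_less[of 0]
  proof eventually_elim
    case (elim h)
    have "ereal (1/h) * Hm1norm kap q phi phi2 l (F h) = ereal ((1/h) * M (F h))"
      using Hm1_M[OF elim(1)] by simp
    also have "(1/h) * M (F h) = M (G h)" unfolding G_def using M_scale[OF elim(1), of "1/h"] elim(2) by simp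
    finally show ?case .
  qed
  have mG: "eventually (\<lambda>h. (\<Sum>x\<in>UNIV. q x * G h x) = 0) (at_right 0)"
    using mF by eventually_elim (simp add: G_def sum_divide_distrib[symmetric])
  have "((\<lambda>h. M (G h) - M f) \<longlongrightarrow> 0) (at_right 0)"
  proof (rule Lim_null_comparison)
    show "eventually (\<lambda>h. norm (M (G h) - M f) \<le> C * L1 (\<lambda>x. G h x - f x)) (at_right 0)"
      using mG by eventually_elim (use M_lip[OF _ mf] in auto)
    have "((\<lambda>h. C * L1 (\<lambda>x. G h x - f x)) \<longlongrightarrow> C * L1 (\<lambda>x. f x - f x)) (at_right 0)"
      using conv unfolding G_def by (intro tendsto_intros) auto
    thus "((\<lambda>h. C * L1 (\<lambda>x. G h x - f x)) \<longlongrightarrow> 0) (at_right 0)" by simp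
  qed
  hence "((\<lambda>h. M (G h)) \<longlongrightarrow> M f) (at_right 0)" by (simp add: LIM_zero_iff)
  hence "((\<lambda>h. ereal (M (G h))) \<longlongrightarrow> ereal (M f)) (at_right 0)" by (rule tendsto_ereal)
  thus ?thesis using tendsto_cong[OF ev] Hm1_M[OF mf] by simp
qed

end


lemma ico_right: fixes f :: "real \<Rightarrow> real"
  assumes "(f \<longlongrightarrow> D) (at t0 within {t0..<t0+e})" "e > 0"
  shows "(f \<longlongrightarrow> D) (at_right t0)"
proof -
  have "at t0 within {t0..<t0+e} = at_right t0"
    using assms(2) by (intro at_within_nhd[of _ "{t0-e<..<t0+e}"]) auto
  thus ?thesis using assms(1) by simp
qed
lemma shift_lim: fixes f :: "real \<Rightarrow> real"
  assumes "((\<lambda>s. (f s - f t0) / (s - t0)) \<longlongrightarrow> D) (at_right t0)"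
  shows "((\<lambda>h. (f (t0 + h) - f t0) / h) \<longlongrightarrow> D) (at_right 0)"
  using assms unfolding at_right_to_0[of t0] filterlim_filtermap by (simp add: add.commute)
lemma ge_right: fixes f :: "real \<Rightarrow> real"
  assumes "(f \<longlongrightarrow> D) (at t0 within {0..})" "t0 > 0"
  shows "(f \<longlongrightarrow> D) (at_right t0)"
proof -
  have e: "{0..} \<inter> {0<..} - {t0} = UNIV \<inter> {0<..} - {(t0::real)}" by auto
  have "at t0 within {0..} = at t0" using assms(2) at_within_nhd[of t0 "{0<..}" "{0..}" UNIV, OF _ _ e] by simp
  thus ?thesis using assms(1) by (simp add: filterlim_at_split)
qed


lemma rows0:
  assumes "stochastic P" shows "(\<Sum>y\<in>UNIV. kappa_of P x y) = 0"
proof -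
  have "(\<Sum>y\<in>UNIV. kappa_of P x y) = (\<Sum>y\<in>UNIV. P x y) - (\<Sum>y\<in>UNIV. (if x = y then 1 else 0))"
    unfolding kappa_of_def by (simp add: sum_subtractf)
  thus ?thesis using assms unfolding stochastic_def by simp
qed

lemma offd: assumes "stochastic P" "x \<noteq> y" shows "kappa_of P x y \<ge> 0"
  using assms unfolding stochastic_def kappa_of_def by auto

lemma q_pos:
  fixes P :: "'a::finite \<Rightarrow> 'a \<Rightarrow> real"
  assumes irr: "irreducible_chain P" and inv: "invariant_distribution P q" and st: "stochastic P"
  shows "q y > 0"
proof (rule ccontr)
  assume "\<not> q y > 0"
  hence q0: "q y = 0" using inv unfolding invariant_distribution_def by (metis order.not_eq_order_implies_strict)
  have "q x = 0" for x
  proof -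
    have "(x, y) \<in> {(a, b). P a b > 0}\<^sup>*" using irr unfolding irreducible_chain_def by blast
    thus ?thesis
    proof (induction rule: converse_rtrancl_induct)
      case base thus ?case using q0 .
    next
      case (step a b)
      have "q a * P a b \<le> (\<Sum>w\<in>UNIV. q w * P w b)"
        using inv st unfolding invariant_distribution_def stochastic_def
        by (intro member_le_sum) auto
      also have "\<dots> = q b" using inv unfolding invariant_distribution_def by blast
      finally have "q a * P a b \<le> 0" using step by simp
      moreover have "P a b > 0" "q a \<ge> 0" using step inv unfolding invariant_distribution_def by auto
      ultimately show ?case by (simp add: mult_le_0_iff)
    qed
  qed
  hence "(\<Sum>x\<in>UNIV. q x) = 0" by simp
  thus False using inv unfolding invariant_distribution_def by simp
qed

lemma phi_mono:
  assumes phi_deriv: "\<forall>x>0. (phi has_real_derivative phi2 x) (at x)"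
    and phi2_pos: "\<forall>x>0. phi2 x > 0"
    and "0 < a" "a < b"
  shows "phi a < phi b"
proof (rule DERIV_pos_imp_increasing[OF \<open>a < b\<close>])
  fix x assume "a \<le> x" "x \<le> b"
  hence "x > 0" using assms by simp
  thus "\<exists>y. (phi has_real_derivative y) (at x) \<and> 0 < y" using phi_deriv phi2_pos by blast
qed

lemma Theta_pos:
  assumes phi_deriv: "\<forall>x>0. (phi has_real_derivative phi2 x) (at x)"
    and phi2_pos: "\<forall>x>0. phi2 x > 0"
    and "0 < a" "0 < b"
  shows "Theta phi phi2 a b > 0"
proof (cases a b rule: linorder_cases)
  case less thus ?thesis using phi_mono[OF phi_deriv phi2_pos, of a b] assms unfolding Theta_def
    by (simp add: divide_neg_neg)
next
  case equal thus ?thesis using assms unfolding Theta_def by simp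
next
  case greater thus ?thesis using phi_mono[OF phi_deriv phi2_pos, of b a] assms unfolding Theta_def
    by simp
qed

lemma p_pos:
  fixes P :: "'a::finite \<Rightarrow> 'a \<Rightarrow> real"
  assumes st: "stochastic P"
    and p0_pos: "\<forall>x. p0 x > 0"
    and p_init: "\<forall>y. p 0 y = p0 y"
    and p_ode: "\<forall>t\<ge>0. \<forall>y. ((\<lambda>s. p s y) has_real_derivative
                   (\<Sum>x\<in>UNIV. p t x * kappa_of P x y)) (at t within {0..})"
    and t: "t \<ge> 0"
  shows "p t y > 0"
proof (rule ccontr)
  assume neg: "\<not> p t y > 0"
  have cont: "continuous_on {0..} (\<lambda>s. p s w)" for w
    unfolding continuous_on_eq_continuous_within
  proof
    fix x :: real assume "x \<in> {0..}"
    hence "((\<lambda>s. p s w) has_real_derivative (\<Sum>v\<in>UNIV. p x v * kappa_of P v w)) (at x within {0..})"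
      using p_ode by simp
    thus "continuous (at x within {0..}) (\<lambda>s. p s w)" by (rule DERIV_continuous)
  qed
  define Z where "Z = {s \<in> {0..t}. \<exists>w. p s w \<le> 0}"
  have Zeq: "Z = (\<Union>w\<in>UNIV. {0..t} \<inter> (\<lambda>s. p s w) -` {..0})" unfolding Z_def by auto
  have cl: "closed ({0..t} \<inter> (\<lambda>s. p s w) -` {..0})" for w
      by (rule continuous_closed_preimage[OF continuous_on_subset[OF cont]]) auto
  have "closed Z" unfolding Zeq using cl by (intro closed_UN) auto
  moreover have "t \<in> Z" using neg t unfolding Z_def by (auto simp: not_less)
  moreover have bb: "bdd_below Z" unfolding Z_def by (intro bdd_belowI[of _ 0]) auto
  ultimately have "Inf Z \<in> Z" using closed_contains_Inf by blast
  then obtain w where tau: "0 \<le> Inf Z" "Inf Z \<le> t" "p (Inf Z) w \<le> 0" unfolding Z_def by auto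
  have below: "p s v > 0" if "0 \<le> s" "s < Inf Z" for s v
  proof (rule ccontr)
    assume "\<not> p s v > 0"
    hence "s \<in> Z" using that tau unfolding Z_def by (auto simp: not_less)
    hence "Inf Z \<le> s" using bb by (rule cInf_lower)
    thus False using that by simp
  qed
  have "exp 0 * p 0 w \<le> exp (Inf Z) * p (Inf Z) w"
  proof (rule DERIV_nonneg_imp_increasing_open[OF tau(1), where f="\<lambda>s. exp s * p s w"])
    fix x assume x: "0 < x" "x < Inf Z"
    have d: "((\<lambda>s. p s w) has_real_derivative (\<Sum>v\<in>UNIV. p x v * kappa_of P v w)) (at x)"
    proof -
      have "((\<lambda>s. p s w) has_real_derivative (\<Sum>v\<in>UNIV. p x v * kappa_of P v w)) (at x within {0..})"
        using p_ode x by simp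
      hence "((\<lambda>s. p s w) has_real_derivative (\<Sum>v\<in>UNIV. p x v * kappa_of P v w)) (at x within {0<..})"
        by (rule has_field_derivative_subset) auto
      moreover have "at x within {0<..} = at x" using x by (intro at_within_open) auto
      ultimately show ?thesis by simp
    qed
    have dl: "(\<Sum>v\<in>UNIV. p x v * (if v = w then 1 else 0)) = p x w"
    proof -
      have "(\<Sum>v\<in>UNIV. p x v * (if v = w then 1 else 0)) = (\<Sum>v\<in>UNIV. if v = w then p x v else 0)"
        by (intro sum.cong) auto
      thus ?thesis by simp
    qed
    have "(\<Sum>v\<in>UNIV. p x v * kappa_of P v w) = (\<Sum>v\<in>UNIV. p x v * P v w) - p x w"
      unfolding kappa_of_def by (simp add: right_diff_distrib sum_subtractf dl)
    moreover have "(\<Sum>v\<in>UNIV. p x v * P v w) \<ge> 0"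
      using below[of x] x st unfolding stochastic_def by (intro sum_nonneg) (simp add: less_imp_le)
    ultimately have "p x w + (\<Sum>v\<in>UNIV. p x v * kappa_of P v w) \<ge> 0" by linarith
    hence "exp x * (p x w + (\<Sum>v\<in>UNIV. p x v * kappa_of P v w)) \<ge> 0" by simp
    hence nn: "exp x * p x w + exp x * (\<Sum>v\<in>UNIV. p x v * kappa_of P v w) \<ge> 0"
      by (simp only: distrib_left)
    have "((\<lambda>s. exp s * p s w) has_real_derivative exp x * p x w + exp x * (\<Sum>v\<in>UNIV. p x v * kappa_of P v w)) (at x)"
      using DERIV_mult[OF DERIV_exp d] by (simp add: algebra_simps)
    thus "\<exists>y. ((\<lambda>s. exp s * p s w) has_real_derivative y) (at x) \<and> 0 \<le> y" using nn by blast
  next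
    show "continuous_on {0..Inf Z} (\<lambda>s. exp s * p s w)"
      by (rule continuous_on_mult[OF continuous_on_exp[OF continuous_on_id] continuous_on_subset[OF cont]]) auto
  qed
  moreover have "exp (Inf Z) * p (Inf Z) w \<le> 0" using tau(3) by (simp add: mult_nonneg_nonpos)
  moreover have "exp 0 * p 0 w = p 0 w" by simp
  ultimately have "p 0 w \<le> 0" by linarith
  moreover have "p 0 w > 0" using p0_pos p_init by simp
  ultimately show False by linarith
qed


lemma Bf_const: "Bf kap q phi phi2 l u (\<lambda>_. c) = 0"
  unfolding Bf_def grad_def by simp

lemma Bf_neg: "Bf kap q phi phi2 l (\<lambda>x. - u x) g = - Bf kap q phi phi2 l u g"
  unfolding Bf_def grad_def by (simp add: sum_negf[symmetric] case_prod_unfold algebra_simps)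

lemma H1norm_neg: "H1norm kap q phi phi2 l (\<lambda>x. - u x) = H1norm kap q phi phi2 l u"
proof -
  have "\<And>x y. (- u y - - u x)\<^sup>2 = (u y - u x)\<^sup>2" by (simp add: power2_eq_square algebra_simps)
  thus ?thesis unfolding H1norm_def grad_def by simp
qed

lemma mean_rep:
  assumes "\<And>g. (\<Sum>x\<in>UNIV. q x * f x * g x) = - Bf kap q phi phi2 l u g"
  shows "(\<Sum>x\<in>UNIV. q x * f x) = 0"
  using assms[of "\<lambda>_. 1"] by (simp add: Bf_const)

theorem proposition8p5:
  fixes P :: "'a::finite \<Rightarrow> 'a \<Rightarrow> real"
    and q p0 :: "'a \<Rightarrow> real"
    and Phi phi phi2 :: "real \<Rightarrow> real"
    and p ell :: "real \<Rightarrow> 'a \<Rightarrow> real"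
    and t0 \<epsilon> :: real
    and psi lpsi :: "real \<Rightarrow> 'a \<Rightarrow> real"
  assumes stoch: "stochastic P"
    and irred: "irreducible_chain P"
    and inv: "invariant_distribution P q"
    and db: "\<forall>y z. q y * kappa_of P y z = q z * kappa_of P z y"
    and Phi_convex: "convex_on {0<..} Phi"
    and Phi_deriv: "\<forall>x>0. (Phi has_real_derivative phi x) (at x)"
    and phi_deriv: "\<forall>x>0. (phi has_real_derivative phi2 x) (at x)"
    and phi_cont: "continuous_on {0<..} phi"
    and phi2_cont: "continuous_on {0<..} phi2"
    and phi2_pos: "\<forall>x>0. phi2 x > 0"
    and Phi1: "Phi 1 = 0"
    and p0_pos: "\<forall>x. p0 x > 0"
    and p0_sum: "(\<Sum>x\<in>UNIV. p0 x) = 1"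
    and p_init: "\<forall>y. p 0 y = p0 y"
    and p_ode: "\<forall>t\<ge>0. \<forall>y. ((\<lambda>s. p s y) has_real_derivative
                   (\<Sum>x\<in>UNIV. p t x * kappa_of P x y)) (at t within {0..})"
    and ell_def: "\<forall>t y. ell t y = p t y / q y"
    and t0_pos: "t0 > 0"
    and eps_pos: "\<epsilon> > 0"
    and psi_cont: "\<forall>y. continuous_on {t0..<t0+\<epsilon>} (\<lambda>t. psi t y)"
    and lpsi_pos: "\<forall>t\<in>{t0..<t0+\<epsilon>}. \<forall>y. lpsi t y > 0"
    and lpsi_init: "lpsi t0 = ell t0"
    and lpsi_eq: "\<forall>t\<in>{t0..<t0+\<epsilon>}. \<forall>y. ((\<lambda>s. lpsi s y) has_real_derivative
                   - divg (kappa_of P) (flux phi phi2 (ell t) (psi t)) y) (at t within {t0..<t0+\<epsilon>})"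
  shows "((\<lambda>h. ereal (1/h) * Hm1norm (kappa_of P) q phi phi2 (ell t0) (\<lambda>y. ell (t0+h) y - ell t0 y))
            \<longlongrightarrow> Hm1norm (kappa_of P) q phi phi2 (ell t0) (gen (kappa_of P) (ell t0))) (at_right 0)
       \<and> Hm1norm (kappa_of P) q phi phi2 (ell t0) (gen (kappa_of P) (ell t0))
           = ereal (H1norm (kappa_of P) q phi phi2 (ell t0) (\<lambda>y. phi (ell t0 y)))
       \<and> ((\<lambda>h. ereal (1/h) * Hm1norm (kappa_of P) q phi phi2 (ell t0) (\<lambda>y. lpsi (t0+h) y - lpsi t0 y))
            \<longlongrightarrow> Hm1norm (kappa_of P) q phi phi2 (ell t0) (divg (kappa_of P) (flux phi phi2 (ell t0) (psi t0)))) (at_right 0)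
       \<and> Hm1norm (kappa_of P) q phi phi2 (ell t0) (divg (kappa_of P) (flux phi phi2 (ell t0) (psi t0)))
           = ereal (H1norm (kappa_of P) q phi phi2 (ell t0) (psi t0))"
proof -
  let ?k = "kappa_of P"
  let ?l = "ell t0"
  have qp: "\<forall>y. q y > 0" using q_pos[OF irred inv stoch] by blast
  have pp: "\<forall>y. p t0 y > 0" using p_pos[OF stoch p0_pos p_init p_ode] t0_pos by auto
  have lp: "\<forall>y. ?l y > 0" using qp pp ell_def by simp
  have rows: "\<forall>x. (\<Sum>y\<in>UNIV. ?k x y) = 0" using rows0[OF stoch] by blast
  have off: "\<forall>x y. x \<noteq> y \<longrightarrow> ?k x y \<ge> 0" using offd[OF stoch] by blast
  have thp: "\<forall>x y. vartheta phi phi2 ?l x y > 0"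
    using Theta_pos[OF phi_deriv phi2_pos] lp unfolding vartheta_def by blast
  have W: "\<forall>x y. ?k x y > 0 \<longrightarrow> (1/2) * ?k x y * q x * vartheta phi phi2 ?l x y \<ge> 0"
    using qp thp by (auto intro!: mult_nonneg_nonneg less_imp_le)
  have inj: "\<forall>x y. ?l x \<noteq> ?l y \<longrightarrow> phi (?l x) \<noteq> phi (?l y)"
  proof (intro allI impI)
    fix x y assume "?l x \<noteq> ?l y"
    thus "phi (?l x) \<noteq> phi (?l y)"
      using phi_mono[OF phi_deriv phi2_pos, of "?l x" "?l y"] phi_mono[OF phi_deriv phi2_pos, of "?l y" "?l x"] lp
      by (metis linorder_neq_iff less_irrefl)
  qed
  have edge: "\<forall>a b. a \<noteq> b \<longrightarrow> P a b > 0 \<longrightarrow> ?k a b > 0 \<and> (1/2) * ?k a b * q a * vartheta phi phi2 ?l a b > 0"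
    using qp thp by (auto simp: kappa_of_def)
  obtain C where C: "C \<ge> 0" "\<forall>g x y. \<bar>g x - g y\<bar> \<le> C * H1norm ?k q phi phi2 ?l g"
    using poincare[of P ?k q phi phi2 ?l] irred edge W unfolding irreducible_chain_def by blast
  interpret PC ?k q phi phi2 ?l C using W C qp by unfold_locales (auto intro: less_imp_le)

  have repK: "\<And>g. (\<Sum>x\<in>UNIV. q x * gen ?k ?l x * g x) = - Bf ?k q phi phi2 ?l (\<lambda>y. phi (?l y)) g"
    by (rule gen_repr[OF db rows off inj])
  have e2: "Hm1norm ?k q phi phi2 ?l (gen ?k ?l) = ereal (H1norm ?k q phi phi2 ?l (\<lambda>y. phi (?l y)))"
    by (rule Hm1_repr[OF W repK])
  define dv where "dv = divg ?k (flux phi phi2 ?l (psi t0))"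
  have repD: "\<And>g. (\<Sum>x\<in>UNIV. q x * dv x * g x) = - Bf ?k q phi phi2 ?l (psi t0) g"
    unfolding dv_def by (rule divg_repr[OF db off])
  have e4: "Hm1norm ?k q phi phi2 ?l dv = ereal (H1norm ?k q phi phi2 ?l (psi t0))"
    by (rule Hm1_repr[OF W repD])
  have repD': "\<And>g. (\<Sum>x\<in>UNIV. q x * (- dv x) * g x) = - Bf ?k q phi phi2 ?l (\<lambda>x. - psi t0 x) g"
  proof -
    fix g
    have "(\<Sum>x\<in>UNIV. q x * (- dv x) * g x) = - (\<Sum>x\<in>UNIV. q x * dv x * g x)"
      by (simp add: sum_negf[symmetric])
    thus "?thesis g" using repD[of g] Bf_neg[of ?k q phi phi2 ?l "psi t0" g] by simp
  qed
  have e4': "Hm1norm ?k q phi phi2 ?l (\<lambda>x. - dv x) = ereal (H1norm ?k q phi phi2 ?l (psi t0))"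
    using Hm1_repr[OF W repD'] H1norm_neg by simp

  have dsum: "((\<lambda>s. \<Sum>y\<in>UNIV. p s y) has_real_derivative 0) (at t within {0..})" if "t \<in> {0..}" for t
  proof -
    have "((\<lambda>s. \<Sum>y\<in>UNIV. p s y) has_real_derivative (\<Sum>y\<in>UNIV. \<Sum>x\<in>UNIV. p t x * ?k x y)) (at t within {0..})"
      using p_ode that by (intro DERIV_sum) auto
    moreover have "(\<Sum>y\<in>UNIV. \<Sum>x\<in>UNIV. p t x * ?k x y) = 0"
      using rows by (subst sum.swap) (simp add: sum_distrib_left[symmetric])
    ultimately show ?thesis by simp
  qed
  obtain c where c: "\<forall>t\<in>{0..}. (\<Sum>y\<in>UNIV. p t y) = c"
    using has_field_derivative_zero_constant[of "{0..}" "\<lambda>s. \<Sum>y\<in>UNIV. p s y", OF _ dsum] by auto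
  have mF1: "eventually (\<lambda>h. (\<Sum>x\<in>UNIV. q x * (ell (t0 + h) x - ell t0 x)) = 0) (at_right 0)"
    using eventually_at_right_less[of 0]
  proof eventually_elim
    case (elim h)
    have "(\<Sum>x\<in>UNIV. q x * (ell (t0 + h) x - ell t0 x)) = (\<Sum>x\<in>UNIV. p (t0 + h) x) - (\<Sum>x\<in>UNIV. p t0 x)"
      using qp ell_def by (simp add: right_diff_distrib sum_subtractf less_imp_neq[symmetric])
    thus ?case using c elim t0_pos by simp
  qed
  have dell: "((\<lambda>s. ell s y) has_real_derivative gen ?k ?l y) (at t0 within {0..})" for y
  proof -
    have "((\<lambda>s. p s y / q y) has_real_derivative (\<Sum>x\<in>UNIV. p t0 x * ?k x y) / q y) (at t0 within {0..})"
      using p_ode t0_pos by (intro DERIV_cdivide) auto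
    moreover have "(\<lambda>s. ell s y) = (\<lambda>s. p s y / q y)" using ell_def by auto
    moreover have "(\<Sum>x\<in>UNIV. p t0 x * ?k x y) / q y = gen ?k ?l y"
      unfolding gen_def sum_divide_distrib
    proof (intro sum.cong refl)
      fix x
      have "q y * ?k y x = q x * ?k x y" using db by blast
      hence hk: "?k y x = q x * ?k x y / q y" using qp by (simp add: field_simps less_imp_neq[symmetric])
      have lx: "?l x = p t0 x / q x" using ell_def by simp
      have "?k y x * ?l x = (q x * ?k x y / q y) * (p t0 x / q x)" using hk lx by simp
      also have "\<dots> = p t0 x * ?k x y / q y" using qp[rule_format, of x] by (simp add: field_simps)
      finally show "p t0 x * ?k x y / q y = ?k y x * ?l x" by simp
    qed
    ultimately show ?thesis by simp
  qed
  have conv1: "\<forall>y. ((\<lambda>h. (ell (t0 + h) y - ell t0 y) / h) \<longlongrightarrow> gen ?k ?l y) (at_right 0)"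
  proof
    fix y
    have "((\<lambda>s. (ell s y - ell t0 y) / (s - t0)) \<longlongrightarrow> gen ?k ?l y) (at t0 within {0..})"
      using dell[of y] unfolding has_field_derivative_iff .
    from shift_lim[where f="\<lambda>s. ell s y", OF ge_right[OF this t0_pos]]
    show "((\<lambda>h. (ell (t0 + h) y - ell t0 y) / h) \<longlongrightarrow> gen ?k ?l y) (at_right 0)" .
  qed
  have L1: "((\<lambda>h. ereal (1/h) * Hm1norm ?k q phi phi2 ?l (\<lambda>y. ell (t0+h) y - ell t0 y))
            \<longlongrightarrow> Hm1norm ?k q phi phi2 ?l (gen ?k ?l)) (at_right 0)"
    by (rule lim_lemma[OF mF1 mean_rep[OF repK] conv1])

  have dsum2: "((\<lambda>s. \<Sum>y\<in>UNIV. q y * lpsi s y) has_real_derivative 0) (at t within {t0..<t0+\<epsilon>})"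
    if "t \<in> {t0..<t0+\<epsilon>}" for t
  proof -
    have "((\<lambda>s. \<Sum>y\<in>UNIV. q y * lpsi s y) has_real_derivative
        (\<Sum>y\<in>UNIV. q y * (- divg ?k (flux phi phi2 (ell t) (psi t)) y))) (at t within {t0..<t0+\<epsilon>})"
      using lpsi_eq that by (intro DERIV_sum DERIV_cmult) auto
    moreover have "(\<Sum>y\<in>UNIV. q y * (- divg ?k (flux phi phi2 (ell t) (psi t)) y)) = 0"
      using divg_repr[OF db off, of phi phi2 "ell t" "psi t" "\<lambda>_. 1"]
      by (simp add: Bf_const sum_negf)
    ultimately show ?thesis by simp
  qed
  obtain c2 where c2: "\<forall>t\<in>{t0..<t0+\<epsilon>}. (\<Sum>y\<in>UNIV. q y * lpsi t y) = c2"
    using has_field_derivative_zero_constant[of "{t0..<t0+\<epsilon>}" "\<lambda>s. \<Sum>y\<in>UNIV. q y * lpsi s y", OF _ dsum2] by auto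
  have mF2: "eventually (\<lambda>h. (\<Sum>x\<in>UNIV. q x * (lpsi (t0 + h) x - lpsi t0 x)) = 0) (at_right 0)"
  proof -
    have ev_eps: "eventually (\<lambda>h::real. h < \<epsilon>) (at_right 0)"
      unfolding eventually_at_right_field using eps_pos by blast
    show ?thesis
    using eventually_at_right_less[of 0] ev_eps
  proof eventually_elim
    case (elim h)
    have "(\<Sum>x\<in>UNIV. q x * (lpsi (t0 + h) x - lpsi t0 x)) = (\<Sum>x\<in>UNIV. q x * lpsi (t0 + h) x) - (\<Sum>x\<in>UNIV. q x * lpsi t0 x)"
      by (simp add: right_diff_distrib sum_subtractf)
    thus ?case using c2 elim eps_pos by simp
  qed
  qed
  have conv2: "\<forall>y. ((\<lambda>h. (lpsi (t0 + h) y - lpsi t0 y) / h) \<longlongrightarrow> - dv y) (at_right 0)"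
  proof
    fix y
    have "((\<lambda>s. lpsi s y) has_real_derivative - dv y) (at t0 within {t0..<t0+\<epsilon>})"
      using lpsi_eq eps_pos unfolding dv_def by auto
    hence "((\<lambda>s. (lpsi s y - lpsi t0 y) / (s - t0)) \<longlongrightarrow> - dv y) (at t0 within {t0..<t0+\<epsilon>})"
      unfolding has_field_derivative_iff .
    from shift_lim[where f="\<lambda>s. lpsi s y", OF ico_right[OF this eps_pos]]
    show "((\<lambda>h. (lpsi (t0 + h) y - lpsi t0 y) / h) \<longlongrightarrow> - dv y) (at_right 0)" .
  qed
  have L3: "((\<lambda>h. ereal (1/h) * Hm1norm ?k q phi phi2 ?l (\<lambda>y. lpsi (t0+h) y - lpsi t0 y))
            \<longlongrightarrow> Hm1norm ?k q phi phi2 ?l (\<lambda>x. - dv x)) (at_right 0)"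
    by (rule lim_lemma[OF mF2 mean_rep[OF repD'] conv2])
  show ?thesis using L1 e2 L3 e4 e4' unfolding dv_def by simp
qed

end
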